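(* Let $L\ge1$ and $K\ge L$ be integers. (i) Assume $\alpha\in(\alpha_{L+1},\alpha_L)$. There is a constant $c(K)>0$ depending only on $\alpha$ and $K$ such that: if $(l_0,\dots,l_{K+2})$ satisfies $(E_K)$ and $l_1,\dots,l_{K+2}\ge0$, then $d_0\ge c(K)$; and if moreover $l_{K+2}=0$, then $d_{K+1}\le-c(K)$. (ii) Assume $\alpha\in(\alpha_{L+1},\alpha_L]$. If $(l_0,\dots,l_{K+2})$ satisfies $(E_K)$, then $$l_{L+2}-\alpha l_{L+1}=-\frac{\sin(\frac{L+2}{2}\omega)}{\sin(\frac{L}{2}\omega)}\,l_1+2\alpha\,\frac{\cos(\frac{\omega}{2})\sin(\frac{L+3}{2}\omega)}{\sin(\frac{L}{2}\omega)}\,l_{L+1}.$$ Moreover, if $\alpha\in(\alpha_{L+1},\alpha_L)$ and $l_1,\dots,l_{K+2}\ge0$, then $l_{L+2}-\alpha l_{L+1}<-c(K)$ (for a positive constant $c(K)$ depending only on $\alpha,K$, which may be taken equal to the one in (i)).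
   Context: Define $\alpha_1:=+\infty$ and, for $L\ge2$, $\alpha_L:=\dfrac{1}{1+2\cos(\frac{2\pi}{L+2})}$. For $\alpha>1/3$, let $\omega\in(0,\pi)$ be the unique real with $\cos\omega=\frac{1-\alpha}{2\alpha}$. For an integer $K\ge0$ and a real vector $(l_0,\dots,l_{K+2})$, set $d_0:=l_0-l_1+\alpha l_2$, $d_j:=-\alpha l_{j-1}+l_j-l_{j+1}+\alpha l_{j+2}$ for $j\in\{1,\dots,K\}$, and $d_{K+1}:=-\alpha l_K+l_{K+1}-l_{K+2}$. The system $(E_K)$ is: $d_1=\dots=d_K=0$, $l_0=0$, and $\sum_{j=1}^{K+1}l_j=1$. *)

theory Defs
  imports Complex_Main "HOL-Library.Extended_Real"
begin

definition alpha_crit :: "nat \<Rightarrow> ereal" where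
  "alpha_crit L = (if L \<le> 1 then \<infinity>
      else ereal (1 / (1 + 2 * cos (2 * pi / real (L + 2)))))"

definition omega :: "real \<Rightarrow> real" where
  "omega \<alpha> = arccos ((1 - \<alpha>) / (2 * \<alpha>))"

definition dq :: "real \<Rightarrow> nat \<Rightarrow> (nat \<Rightarrow> real) \<Rightarrow> nat \<Rightarrow> real" where
  "dq \<alpha> K l j =
     (if j = 0 then l 0 - l 1 + \<alpha> * l 2
      else if j \<le> K then - \<alpha> * l (j - 1) + l j - l (j + 1) + \<alpha> * l (j + 2)
      else - \<alpha> * l K + l (K + 1) - l (K + 2))"

definition system_E :: "real \<Rightarrow> nat \<Rightarrow> (nat \<Rightarrow> real) \<Rightarrow> bool" where
  "system_E \<alpha> K l \<longleftrightarrow>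
     (\<forall>j\<in>{1..K}. dq \<alpha> K l j = 0) \<and> l 0 = 0 \<and> (\<Sum>j=1..K+1. l j) = 1"

end

theory Submission
  imports Defs
begin

definition sf :: "real \<Rightarrow> real \<Rightarrow> real \<Rightarrow> real \<Rightarrow> real" where
  "sf w Q R x = Q * (cos (x * w) - 1) + R * sin (x * w)"
definition sW :: "real \<Rightarrow> real \<Rightarrow> real \<Rightarrow> real \<Rightarrow> real" where
  "sW w Q R s = R * cos (s * (w/2)) - Q * sin (s * (w/2))"

lemma sf_diff: "sf w Q R a - sf w Q R b = 2 * sin ((a - b) * (w/2)) * sW w Q R (a + b)"
proof -
  define u where "u = (a+b)*(w/2)"
  define v where "v = (a-b)*(w/2)"
  have a: "a * w = u + v" and b: "b * w = u - v" unfolding u_def v_def by (simp_all add: field_simps)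
  show ?thesis unfolding sf_def sW_def a b u_def[symmetric] v_def[symmetric]
    by (simp add: sin_add sin_diff cos_add cos_diff algebra_simps)
qed

lemma sf_0[simp]: "sf w Q R 0 = 0" by (simp add: sf_def)

lemma sf_eq: "sf w Q R a = 2 * sin (a * (w/2)) * sW w Q R a"
  using sf_diff[of w Q R a 0] by simp

lemma sW_three: "sW w Q R a * sin ((c - b) * (w/2)) + sW w Q R b * sin ((a - c) * (w/2))
   + sW w Q R c * sin ((b - a) * (w/2)) = 0"
proof -
  have e: "\<And>x y. (x - y) * (w/2) = x*(w/2) - y*(w/2)" by (rule left_diff_distrib)
  show ?thesis unfolding sW_def e by (simp add: sin_diff algebra_simps)
qed

lemma sW_inv:
  "sW w Q R i * sin (j*(w/2)) - sW w Q R j * sin (i*(w/2)) = R * sin ((j - i)*(w/2))"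
  "sW w Q R i * cos (j*(w/2)) - sW w Q R j * cos (i*(w/2)) = Q * sin ((j - i)*(w/2))"
proof -
  have e: "\<And>x y. (x - y) * (w/2) = x*(w/2) - y*(w/2)" by (rule left_diff_distrib)
  show "sW w Q R i * sin (j*(w/2)) - sW w Q R j * sin (i*(w/2)) = R * sin ((j - i)*(w/2))"
    unfolding sW_def e by (simp add: sin_diff algebra_simps)
  show "sW w Q R i * cos (j*(w/2)) - sW w Q R j * cos (i*(w/2)) = Q * sin ((j - i)*(w/2))"
    unfolding sW_def e by (simp add: sin_diff algebra_simps)
qed

lemma sW_inv_bound:
  "(\<bar>Q\<bar> + \<bar>R\<bar>) * \<bar>sin ((j - i)*(w/2))\<bar> \<le> 2 * (\<bar>sW w Q R i\<bar> + \<bar>sW w Q R j\<bar>)"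
proof -
  have b: "\<bar>x * sin y - z * sin t\<bar> \<le> \<bar>x\<bar> + \<bar>z\<bar>" "\<bar>x * cos y - z * cos t\<bar> \<le> \<bar>x\<bar> + \<bar>z\<bar>"
    for x y z t :: real
  proof -
    have "\<bar>x * sin y\<bar> \<le> \<bar>x\<bar>" "\<bar>z * sin t\<bar> \<le> \<bar>z\<bar>" "\<bar>x * cos y\<bar> \<le> \<bar>x\<bar>" "\<bar>z * cos t\<bar> \<le> \<bar>z\<bar>"
      by (simp_all add: abs_mult mult_left_le)
    then show "\<bar>x * sin y - z * sin t\<bar> \<le> \<bar>x\<bar> + \<bar>z\<bar>" "\<bar>x * cos y - z * cos t\<bar> \<le> \<bar>x\<bar> + \<bar>z\<bar>"
      by linarith+
  qed
  have "\<bar>R\<bar> * \<bar>sin ((j - i)*(w/2))\<bar> \<le> \<bar>sW w Q R i\<bar> + \<bar>sW w Q R j\<bar>"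
    using b(1)[of "sW w Q R i" "j*(w/2)" "sW w Q R j" "i*(w/2)"] sW_inv(1)[of w Q R i j]
    by (simp add: abs_mult)
  moreover have "\<bar>Q\<bar> * \<bar>sin ((j - i)*(w/2))\<bar> \<le> \<bar>sW w Q R i\<bar> + \<bar>sW w Q R j\<bar>"
    using b(2)[of "sW w Q R i" "j*(w/2)" "sW w Q R j" "i*(w/2)"] sW_inv(2)[of w Q R i j]
    by (simp add: abs_mult)
  ultimately show ?thesis by (simp add: algebra_simps)
qed

lemma sf_abs: "\<bar>sf w Q R x\<bar> \<le> 2 * (\<bar>Q\<bar> + \<bar>R\<bar>)"
proof -
  have "\<bar>cos (x*w) - 1\<bar> \<le> 2" using abs_cos_le_one[of "x*w"] by linarith
  then have "\<bar>Q * (cos (x*w) - 1)\<bar> \<le> \<bar>Q\<bar> * 2" by (simp add: abs_mult mult_left_mono)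
  moreover have "\<bar>R * sin (x*w)\<bar> \<le> \<bar>R\<bar>" by (simp add: abs_mult mult_left_le)
  ultimately show ?thesis unfolding sf_def
    using abs_triangle_ineq[of "Q * (cos (x*w) - 1)" "R * sin (x*w)"] abs_ge_zero[of R] by (smt (verit))
qed

lemma sf_rec:
  assumes "\<alpha> * (1 + 2 * cos w) = 1"
  shows "\<alpha> * (sf w Q R (x + 3) - sf w Q R x) = sf w Q R (x + 2) - sf w Q R (x + 1)"
proof -
  define h where "h = w/2"
  have w: "w = 2*h" unfolding h_def by simp
  have s3: "sin (3*h) = sin h * (1 + 2 * cos w)"
  proof -
    have "sin (3*h) = sin (2*h + h)" by simp
    also have "\<dots> = sin (2*h) * cos h + cos (2*h) * sin h" by (rule sin_add)
    finally have 1: "sin (3*h) = sin (2*h) * cos h + cos (2*h) * sin h" .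
    have 2: "sin h = sin (2*h) * cos h - cos (2*h) * sin h"
      using sin_diff[of "2*h" h] by simp
    show ?thesis using 1 2 unfolding w by (simp add: algebra_simps)
  qed
  have "sf w Q R (x + 3) - sf w Q R x = 2 * sin (3 * h) * sW w Q R (2*x+3)"
    using sf_diff[of w Q R "x+3" x] unfolding h_def by (simp add: algebra_simps)
  moreover have "sf w Q R (x + 2) - sf w Q R (x+1) = 2 * sin h * sW w Q R (2*x+3)"
    using sf_diff[of w Q R "x+2" "x+1"] unfolding h_def by (simp add: algebra_simps)
  moreover have "\<alpha> * (2 * sin (3 * h) * sW w Q R (2*x+3)) = (\<alpha> * (1 + 2 * cos w)) * (2 * sin h * sW w Q R (2*x+3))"
    using s3 by (simp add: algebra_simps)
  ultimately show ?thesis using assms by simp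
qed


lemma rep:
  assumes sysE: "system_E \<alpha> K l" and a: "\<alpha> * (1 + 2 * cos w) = 1"
    and s0: "sin w \<noteq> 0" and c1: "cos w \<noteq> 1"
  shows "\<exists>Q R. \<forall>n\<le>K+2. l n = sf w Q R (real n)"
proof -
  define Q where "Q = (l 2 - 2 * cos w * l 1) / (2 * (cos w - 1))"
  define R where "R = (l 1 - Q * (cos w - 1)) / sin w"
  have l0: "l 0 = 0" using sysE unfolding system_E_def by simp
  have e1: "sf w Q R 1 = l 1" unfolding sf_def R_def using s0 by simp
  have cd: "cos (2*w) = 2 * (cos w)^2 - 1" by (simp add: cos_double_cos)
  have sd: "sin (2*w) = 2 * sin w * cos w" by (simp add: sin_double)
  have "sf w Q R 2 = 2 * cos w * (Q * (cos w - 1) + R * sin w) + 2 * Q * (cos w - 1)"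
    unfolding sf_def cd sd by (simp add: algebra_simps power2_eq_square)
  also have "Q * (cos w - 1) + R * sin w = l 1" using e1 unfolding sf_def by simp
  also have "2 * Q * (cos w - 1) = l 2 - 2 * cos w * l 1" unfolding Q_def using c1 by (simp add: field_simps)
  finally have e2: "sf w Q R 2 = l 2" by simp
  have "\<forall>n. n \<le> K+2 \<longrightarrow> l n = sf w Q R (real n)"
  proof (intro allI)
    fix n show "n \<le> K+2 \<longrightarrow> l n = sf w Q R (real n)"
    proof (induction n rule: less_induct)
      case (less n)
      show ?case
      proof (cases "n < 3")
        case True
        then have "n = 0 \<or> n = 1 \<or> n = 2" by auto
        then show ?thesis using l0 e1 e2 by auto
      next
        case False
        then obtain m where m: "n = m + 3" by (metis add.commute le_Suc_ex not_less)
        show ?thesis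
        proof
          assume nK: "n \<le> K+2"
          have j: "m + 1 \<in> {1..K}" using nK m by auto
          have "dq \<alpha> K l (m+1) = 0" using sysE j unfolding system_E_def by blast
          then have d: "- \<alpha> * l m + l (m+1) - l (m+2) + \<alpha> * l (m+3) = 0"
            using j unfolding dq_def by (simp add: add.assoc numeral_3_eq_3)
          have ih: "l m = sf w Q R (real m)" "l (m+1) = sf w Q R (real m + 1)"
             "l (m+2) = sf w Q R (real m + 2)"
            using less.IH[of m] less.IH[of "m+1"] less.IH[of "m+2"] m nK by (auto simp: add.commute)
          have r: "\<alpha> * (sf w Q R (real m + 3) - sf w Q R (real m)) = sf w Q R (real m + 2) - sf w Q R (real m + 1)"
            by (rule sf_rec[OF a])
          have an: "\<alpha> \<noteq> 0" using a by auto
          have "\<alpha> * l (m+3) = \<alpha> * sf w Q R (real m + 3)" 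
          proof -
            have d': "- \<alpha> * sf w Q R (real m) + sf w Q R (real m + 1) - sf w Q R (real m + 2) + \<alpha> * l (m+3) = 0"
              using d by (simp only: ih)
            have r': "\<alpha> * sf w Q R (real m + 3) - \<alpha> * sf w Q R (real m) = sf w Q R (real m + 2) - sf w Q R (real m + 1)"
              using r by (simp add: right_diff_distrib)
            show ?thesis using d' r' by linarith
          qed
          then show "l n = sf w Q R (real n)" using an m by simp
        qed
      qed
    qed
  qed
  then show ?thesis by blast
qed

lemma sf_reflect:
  assumes "sf w Q R M = 0"
  shows "sf w (Q * cos (M*w) + R * sin (M*w)) (Q * sin (M*w) - R * cos (M*w)) x = sf w Q R (M - x)"
proof -
  have e: "(M - x) * w = M*w - x*w" by (simp add: algebra_simps)
  have z: "Q * (cos (M*w) - 1) + R * sin (M*w) = 0" using assms unfolding sf_def by simp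
  define Q' where "Q' = Q * cos (M*w) + R * sin (M*w)"
  define R' where "R' = Q * sin (M*w) - R * cos (M*w)"
  have z': "Q' = Q" using z unfolding Q'_def by (simp add: algebra_simps)
  have 1: "sf w Q' R' x = Q' * cos (x*w) - Q' + R' * sin (x*w)" unfolding sf_def by (simp add: algebra_simps)
  have 2: "sf w Q R (M - x) = Q' * cos (x*w) - Q + R' * sin (x*w)"
    unfolding sf_def e cos_diff sin_diff Q'_def R'_def by (simp add: algebra_simps)
  show ?thesis using 1 2 z' unfolding Q'_def R'_def by simp
qed


lemma omega_basic:
  assumes "\<alpha> > 1/3"
  shows "0 < omega \<alpha>" "omega \<alpha> < pi" "cos (omega \<alpha>) = (1-\<alpha>)/(2*\<alpha>)"
    "\<alpha> * (1 + 2 * cos (omega \<alpha>)) = 1"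
proof -
  have y1: "(1-\<alpha>)/(2*\<alpha>) < 1" using assms by (simp add: field_simps)
  have y2: "-1 < (1-\<alpha>)/(2*\<alpha>)" using assms by (simp add: field_simps)
  show "0 < omega \<alpha>" "omega \<alpha> < pi" using arccos_lt_bounded[OF y2 y1] unfolding omega_def by auto
  show c: "cos (omega \<alpha>) = (1-\<alpha>)/(2*\<alpha>)" unfolding omega_def using y1 y2 by (simp add: cos_arccos)
  show "\<alpha> * (1 + 2 * cos (omega \<alpha>)) = 1" unfolding c using assms by (simp add: field_simps)
qed

lemma omega_lo:
  assumes L1: "L \<ge> 1" and lo: "alpha_crit (L + 1) < ereal \<alpha>"
  shows "\<alpha> > 1/3" "2*pi/(real L + 3) < omega \<alpha>"
proof -
  define t where "t = 2*pi/(real L + 3)"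
  have t0: "0 < t" "t \<le> pi/2" unfolding t_def using L1 by (auto simp: field_simps)
  have ct: "0 \<le> cos t" "cos t \<le> 1" using t0 by (auto intro: cos_ge_zero)
  have "alpha_crit (L+1) = ereal (1 / (1 + 2 * cos t))" unfolding alpha_crit_def t_def using L1
    by (simp add: add.commute)
  then have a: "1 / (1 + 2 * cos t) < \<alpha>" using lo by simp
  have D: "1 + 2 * cos t > 0" using ct by simp
  have aD: "\<alpha> * (1 + 2 * cos t) > 1" using a D by (simp add: field_simps)
  show a3: "\<alpha> > 1/3"
  proof -
    have "1/3 \<le> 1 / (1 + 2 * cos t)" using ct D by (simp add: field_simps)
    then show ?thesis using a by simp
  qed
  note ob = omega_basic[OF a3]
  have "cos (omega \<alpha>) < cos t" unfolding ob(3) using aD a3 by (simp add: field_simps)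
  then show "2*pi/(real L + 3) < omega \<alpha>" unfolding t_def[symmetric]
    using cos_mono_less_eq[of "omega \<alpha>" t] ob(1,2) t0 by auto
qed

lemma omega_hi:
  assumes L1: "L \<ge> 1" and a3: "\<alpha> > 1/3"
  shows "ereal \<alpha> \<le> alpha_crit L \<Longrightarrow> omega \<alpha> \<le> 2*pi/(real L + 2)"
    "ereal \<alpha> < alpha_crit L \<Longrightarrow> omega \<alpha> < 2*pi/(real L + 2)"
proof -
  define t where "t = 2*pi/(real L + 2)"
  note ob = omega_basic[OF a3]
  have t0: "0 < t" "t \<le> 2*pi/3" unfolding t_def using L1 by (auto simp: field_simps)
  have key: "ereal \<alpha> < alpha_crit L \<Longrightarrow> cos t < cos (omega \<alpha>)"
     "ereal \<alpha> \<le> alpha_crit L \<Longrightarrow> cos t \<le> cos (omega \<alpha>)"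
  proof -
    have "cos t < cos (omega \<alpha>)" if "L = 1"
    proof -
      have "t = pi - pi/3" unfolding t_def using that by simp
      then have "cos t = - cos (pi/3)" by (simp only: cos_pi_minus)
      then have "cos t = - 1/2" by (simp add: cos_60)
      then show ?thesis unfolding ob(3) using a3 by (simp add: field_simps)
    qed
    moreover have "ereal \<alpha> \<le> alpha_crit L \<Longrightarrow> cos t \<le> cos (omega \<alpha>)"
       "ereal \<alpha> < alpha_crit L \<Longrightarrow> cos t < cos (omega \<alpha>)" if "L \<ge> 2"
    proof -
      have t2: "t \<le> pi/2" unfolding t_def using that by (auto simp: field_simps)
      have ct: "0 \<le> cos t" using t0 t2 by (auto intro: cos_ge_zero)
      have ac: "alpha_crit L = ereal (1 / (1 + 2 * cos t))" unfolding alpha_crit_def t_def using that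
        by (simp add: add.commute)
      have D: "1 + 2 * cos t > 0" using ct by simp
      show "ereal \<alpha> \<le> alpha_crit L \<Longrightarrow> cos t \<le> cos (omega \<alpha>)"
      proof -
        assume "ereal \<alpha> \<le> alpha_crit L"
        then have "\<alpha> \<le> 1 / (1 + 2 * cos t)" unfolding ac by simp
        then have "\<alpha> * (1 + 2 * cos t) \<le> 1" using D by (simp add: field_simps)
        then show ?thesis unfolding ob(3) using a3 by (simp add: field_simps)
      qed
      show "ereal \<alpha> < alpha_crit L \<Longrightarrow> cos t < cos (omega \<alpha>)"
      proof -
        assume "ereal \<alpha> < alpha_crit L"
        then have "\<alpha> < 1 / (1 + 2 * cos t)" unfolding ac by simp
        then have "\<alpha> * (1 + 2 * cos t) < 1" using D by (simp add: field_simps)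
        then show ?thesis unfolding ob(3) using a3 by (simp add: field_simps)
      qed
    qed
    ultimately show "ereal \<alpha> < alpha_crit L \<Longrightarrow> cos t < cos (omega \<alpha>)"
     "ereal \<alpha> \<le> alpha_crit L \<Longrightarrow> cos t \<le> cos (omega \<alpha>)"
      using L1 by (cases "L = 1"; fastforce)+
  qed
  have tp: "t \<le> pi" using t0 by simp
  show "ereal \<alpha> \<le> alpha_crit L \<Longrightarrow> omega \<alpha> \<le> 2*pi/(real L + 2)"
    unfolding t_def[symmetric] using key(2) cos_mono_le_eq[of t "omega \<alpha>"] ob(1,2) t0 tp
    by auto
  show "ereal \<alpha> < alpha_crit L \<Longrightarrow> omega \<alpha> < 2*pi/(real L + 2)"
    unfolding t_def[symmetric] using key(1) cos_mono_less_eq[of t "omega \<alpha>"] ob(1,2) t0 tp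
    by auto
qed


lemma trig_key:
  fixes \<alpha> w y :: real
  assumes a: "\<alpha> * (1 + 2 * cos w) = 1"
  shows "sin (y * (w/2)) - \<alpha> * sin ((y - 2) * (w/2)) = 2 * \<alpha> * cos (w/2) * sin ((y + 1) * (w/2))"
proof -
  define h where "h = w/2"
  define v where "v = (y + 1) * h"
  have w: "w = 2*h" unfolding h_def by simp
  have e1: "(y - 2) * h = v - 3*h" "y * h = v - h" unfolding v_def by (simp_all add: algebra_simps)
  have c2: "cos (2*h) = cos h * cos h - sin h * sin h" using cos_add[of h h] by simp
  have s2: "sin (2*h) = 2 * sin h * cos h" using sin_add[of h h] by simp
  have c3: "cos (3*h) = cos (2*h) * cos h - sin (2*h) * sin h" using cos_add[of "2*h" h] by simp
  have s3: "sin (3*h) = sin (2*h) * cos h + cos (2*h) * sin h" using sin_add[of "2*h" h] by simp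
  have p: "sin h * sin h = 1 - cos h * cos h" using sin_cos_squared_add[of h] by (simp add: power2_eq_square)
  have A: "\<alpha> * (1 + 2 * (cos h * cos h - sin h * sin h)) = 1" using a c2 unfolding w by simp
  show ?thesis unfolding h_def[symmetric] e1 v_def[symmetric] sin_diff
    unfolding s3 c3 s2 c2
    using A p by algebra
qed

lemma sf_formula:
  assumes a: "\<alpha> * (1 + 2 * cos w) = 1"
  shows "sin (real L * (w/2)) * (sf w Q R (real L + 2) - \<alpha> * sf w Q R (real L + 1))
     = - sin ((real L + 2) * (w/2)) * sf w Q R 1
       + 2 * \<alpha> * cos (w/2) * sin ((real L + 3) * (w/2)) * sf w Q R (real L + 1)"
proof -
  have d1: "sf w Q R (real L + 2) = 2 * sin ((real L + 2) * (w/2)) * sW w Q R (real L + 2)"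
    by (rule sf_eq)
  have d2: "sf w Q R (real L + 1) - sf w Q R 1 = 2 * sin (real L * (w/2)) * sW w Q R (real L + 2)"
    using sf_diff[of w Q R "real L + 1" 1] by (simp add: add.assoc)
  have k: "sin ((real L + 2) * (w/2)) - \<alpha> * sin (real L * (w/2)) = 2 * \<alpha> * cos (w/2) * sin ((real L + 3) * (w/2))"
    using trig_key[OF a, of "real L + 2"] by (simp add: add.assoc)
  have "sin (real L * (w/2)) * sf w Q R (real L + 2) = sin ((real L + 2) * (w/2)) * (sf w Q R (real L + 1) - sf w Q R 1)"
    unfolding d1 d2 by (simp add: algebra_simps)
  then show ?thesis using k by (simp add: algebra_simps)
qed


definition ca :: "real \<Rightarrow> nat \<Rightarrow> nat \<Rightarrow> real" where
  "ca w K L = min (- sin ((real L + 3) * (w/2))) (sin ((real L + 2) * (w/2))) * sin (w/2) / (2 * (real K + 1))"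
definition cc :: "real \<Rightarrow> real \<Rightarrow> nat \<Rightarrow> nat \<Rightarrow> real" where
  "cc \<alpha> w K L = min (2 * sin ((real L + 2) * (w/2)) * sin (w/2))
      (- 4 * \<alpha> * cos (w/2) * sin ((real L + 3) * (w/2)) * sin ((real L + 1) * (w/2))) / (4 * (real K + 1))"

lemma angle_facts:
  fixes w :: real and L :: nat
  assumes w1: "2*pi/(real L + 3) < w" and w2: "w < 2*pi/(real L + 2)"
  shows "0 < w/2" "w/2 < pi/2" "(real L + 2) * (w/2) < pi" "pi < (real L + 3) * (w/2)"
    "(real L + 3) * (w/2) < 2 * pi"
    "\<And>x. 0 < x \<Longrightarrow> x \<le> real L + 2 \<Longrightarrow> sin (x * (w/2)) > 0"
    "sin ((real L + 3) * (w/2)) < 0" "cos (w/2) > 0"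
proof -
  have p: "0 < pi" by simp
  have A: "2*pi < w * (real L + 3)" using w1 by (simp add: field_simps)
  have B: "w * (real L + 2) < 2*pi" using w2 by (simp add: field_simps)
  have w0: "0 < w" using w1 p by (smt (verit) divide_pos_pos of_nat_0_le_iff)
  show h0: "0 < w/2" using w0 by simp
  show h2: "(real L + 2) * (w/2) < pi" using B by (simp add: algebra_simps)
  have "0 \<le> w * real L" using w0 by simp
  then have "2 * w \<le> w * (real L + 2)" by (simp add: algebra_simps)
  then have wpi: "w < pi" using B by simp
  show "w/2 < pi/2" using wpi by simp
  show h3: "pi < (real L + 3) * (w/2)" using A by (simp add: algebra_simps)
  have "(real L + 3) * (w/2) = (real L + 2) * (w/2) + w/2" by (simp add: algebra_simps)
  then show h4: "(real L + 3) * (w/2) < 2 * pi" using h2 wpi p by linarith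
  show "sin (x * (w/2)) > 0" if "0 < x" "x \<le> real L + 2" for x
  proof (rule sin_gt_zero)
    show "0 < x * (w/2)" using that h0 by simp
    have "x * (w/2) \<le> (real L + 2) * (w/2)" using that h0 by (simp add: mult_right_mono)
    then show "x * (w/2) < pi" using h2 by linarith
  qed
  show "sin ((real L + 3) * (w/2)) < 0" using sin_lt_zero h3 h4 by blast
  show "cos (w/2) > 0" using cos_gt_zero_pi[of "w/2"] h0 wpi by simp
qed

lemma consts_pos:
  fixes w \<alpha> :: real and L K :: nat
  assumes w1: "2*pi/(real L + 3) < w" and w2: "w < 2*pi/(real L + 2)" and ap: "\<alpha> > 0"
  shows "ca w K L > 0" "cc \<alpha> w K L > 0"
proof -
  note af = angle_facts[OF w1 w2]
  have s1: "sin (1 * (w/2)) > 0" by (rule af(6)) simp_all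
  have s2: "sin ((real L + 2) * (w/2)) > 0" by (rule af(6)) simp_all
  have s3: "sin ((real L + 1) * (w/2)) > 0" by (rule af(6)) simp_all
  show "ca w K L > 0" unfolding ca_def using s1 s2 af(7) by simp
  have "- 4 * \<alpha> * cos (w/2) * sin ((real L + 3) * (w/2)) * sin ((real L + 1) * (w/2))
      = 4 * \<alpha> * cos (w/2) * (- sin ((real L + 3) * (w/2))) * sin ((real L + 1) * (w/2))" by simp
  moreover have "4 * \<alpha> * cos (w/2) * (- sin ((real L + 3) * (w/2))) * sin ((real L + 1) * (w/2)) > 0"
    using ap af(7,8) s3 by (intro mult_pos_pos) simp_all
  ultimately show "cc \<alpha> w K L > 0" unfolding cc_def using s1 s2 by simp
qed


lemma gen:
  fixes \<alpha> w Q R :: real and L K :: nat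
  assumes a: "\<alpha> * (1 + 2 * cos w) = 1" and ap: "\<alpha> > 0"
    and w1: "2*pi/(real L + 3) < w" and w2: "w < 2*pi/(real L + 2)" and L1: "L \<ge> 1" and KL: "K \<ge> L"
    and nn: "\<forall>n\<in>{1..K+2}. sf w Q R (real n) \<ge> 0"
    and sm: "(\<Sum>n=1..K+1. sf w Q R (real n)) = 1"
  shows "sf w Q R (-1) \<ge> ca w K L"
    "sf w Q R (real L + 2) - \<alpha> * sf w Q R (real L + 1) \<le> - cc \<alpha> w K L"
proof -
  note af = angle_facts[OF w1 w2]
  define h where "h = w/2"
  define N where "N = \<bar>Q\<bar> + \<bar>R\<bar>"
  define W1 where "W1 = sW w Q R 1"
  define WA where "WA = sW w Q R (real L + 1)"
  define WB where "WB = sW w Q R (real L + 2)"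
  have Kp: "real K + 1 > 0" by simp
  have "(\<Sum>n=1..K+1. sf w Q R (real n)) \<le> (\<Sum>n=1..K+1. 2 * N)"
    by (rule sum_mono) (use sf_abs[of w Q R] in \<open>auto simp: N_def abs_le_iff\<close>)
  then have "1 \<le> (real K + 1) * (2 * N)" using sm by (simp add: add.commute)
  then have NB: "1 / (2 * (real K + 1)) \<le> N" using Kp by (simp add: field_simps)
  have sp: "\<And>x. 0 < x \<Longrightarrow> x \<le> real L + 2 \<Longrightarrow> sin (x * h) > 0" using af(6) unfolding h_def by blast
  have Wnn: "sW w Q R x \<ge> 0" if "x = real n" "n \<in> {1..L+2}" for x n
  proof -
    have "n \<in> {1..K+2}" using that KL by auto
    then have "sf w Q R x \<ge> 0" using nn that by auto
    moreover have "sin (x * h) > 0" using that by (intro sp) auto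
    ultimately show ?thesis using sf_eq[of w Q R x] unfolding h_def[symmetric]
      by (simp add: zero_le_mult_iff)
  qed
  have W1p: "W1 \<ge> 0" unfolding W1_def by (rule Wnn[of 1 1]) (use L1 in auto)
  have WAp: "WA \<ge> 0" unfolding WA_def by (rule Wnn[of _ "L+1"]) auto
  have WBp: "WB \<ge> 0" unfolding WB_def by (rule Wnn[of _ "L+2"]) auto
  have sh: "sin h > 0" using sp[of 1] by simp
  have sL: "sin (real L * h) > 0" using sp[of "real L"] L1 by simp
  have sL1: "sin ((real L + 1) * h) > 0" using sp[of "real L + 1"] by simp
  have sL2: "sin ((real L + 2) * h) > 0" using sp[of "real L + 2"] by simp
  have sL3: "sin ((real L + 3) * h) < 0" using af(7) unfolding h_def .
  have ch: "cos h > 0" using af(8) unfolding h_def .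
  have inv1: "N * sin h \<le> 2 * (WA + WB)"
    using sW_inv_bound[of Q R "real L + 2" "real L + 1" w] WAp WBp sh
    unfolding N_def WA_def WB_def h_def by simp
  have t3: "sW w Q R (-1) * sin h - WA * sin ((real L + 3) * h) + WB * sin ((real L + 2) * h) = 0"
  proof -
    have T: "sW w Q R (real L + 2) * sin ((- 2 - real L) * h) - sW w Q R (- 1) * sin h +
      sW w Q R (real L + 1) * sin ((3 + real L) * h) = 0"
      using sW_three[of w Q R "-1" "real L + 1" "real L + 2"] unfolding h_def[symmetric] by simp
    have e1: "sin ((- 2 - real L) * h) = - sin ((real L + 2) * h)"
    proof -
      have "(- 2 - real L) * h = - ((real L + 2) * h)" by (simp add: algebra_simps)
      then show ?thesis by simp
    qed
    have e2: "(3 + real L) * h = (real L + 3) * h" by simp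
    show ?thesis using T unfolding e1 e2 WA_def WB_def by (simp add: algebra_simps)
  qed
  have fm1: "sf w Q R (-1) = - 2 * sin h * sW w Q R (-1)"
    using sf_eq[of w Q R "-1"] unfolding h_def[symmetric] by simp
  have fa: "sf w Q R (-1) = 2 * (- sin ((real L + 3) * h)) * WA + 2 * sin ((real L + 2) * h) * WB"
    using fm1 t3 by (simp add: algebra_simps)
  define ma where "ma = min (- sin ((real L + 3) * h)) (sin ((real L + 2) * h))"
  have ma0: "ma > 0" unfolding ma_def using sL2 sL3 by simp
  have "ma * WA \<le> (- sin ((real L + 3) * h)) * WA" unfolding ma_def using WAp
    by (intro mult_right_mono) auto
  moreover have "ma * WB \<le> sin ((real L + 2) * h) * WB" unfolding ma_def using WBp
    by (intro mult_right_mono) auto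
  ultimately have "2 * ma * (WA + WB) \<le> sf w Q R (-1)" unfolding fa by (simp add: algebra_simps)
  moreover have "ma * (N * sin h) \<le> ma * (2 * (WA + WB))" using inv1 ma0 by simp
  moreover have "ma * sin h * (1 / (2 * (real K + 1))) \<le> ma * sin h * N"
    using NB ma0 sh by (intro mult_left_mono) auto
  ultimately have "ma * sin h * (1 / (2 * (real K + 1))) \<le> sf w Q R (-1)"
    by (simp add: algebra_simps)
  then show "sf w Q R (-1) \<ge> ca w K L" unfolding ca_def h_def[symmetric] ma_def[symmetric] by simp
  define X where "X = sf w Q R (real L + 2) - \<alpha> * sf w Q R (real L + 1)"
  have f1: "sf w Q R 1 = 2 * sin h * W1" using sf_eq[of w Q R 1] unfolding h_def[symmetric] W1_def by simp
  have fA: "sf w Q R (real L + 1) = 2 * sin ((real L + 1) * h) * WA"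
    using sf_eq[of w Q R "real L + 1"] unfolding h_def[symmetric] WA_def by simp
  define c1 where "c1 = 2 * sin ((real L + 2) * h) * sin h"
  define c2 where "c2 = - 4 * \<alpha> * cos h * sin ((real L + 3) * h) * sin ((real L + 1) * h)"
  have F: "sin (real L * h) * X = - sin ((real L + 2) * h) * sf w Q R 1
       + 2 * \<alpha> * cos h * sin ((real L + 3) * h) * sf w Q R (real L + 1)"
    using sf_formula[OF a, of L Q R] unfolding X_def h_def by simp
  have fX: "sin (real L * h) * X = - c1 * W1 - c2 * WA"
    unfolding F f1 fA c1_def c2_def by (simp add: algebra_simps)
  define mc where "mc = min c1 c2"
  have c1p: "c1 > 0" unfolding c1_def using sL2 sh by simp
  have "4 * \<alpha> * cos h * (- sin ((real L + 3) * h)) * sin ((real L + 1) * h) > 0"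
    using ap ch sL3 sL1 by (intro mult_pos_pos) simp_all
  then have c2p: "c2 > 0" unfolding c2_def by simp
  have mc0: "mc > 0" unfolding mc_def using c1p c2p by simp
  have inv2: "N * sin (real L * h) \<le> 2 * (W1 + WA)"
    using sW_inv_bound[of Q R "real L + 1" 1 w] W1p WAp sL
    unfolding N_def W1_def WA_def h_def by simp
  have "mc * W1 \<le> c1 * W1" unfolding mc_def using W1p by (intro mult_right_mono) auto
  moreover have "mc * WA \<le> c2 * WA" unfolding mc_def using WAp by (intro mult_right_mono) auto
  ultimately have "sin (real L * h) * X \<le> - mc * (W1 + WA)" unfolding fX by (simp add: algebra_simps)
  also have "\<dots> \<le> - mc * (N * sin (real L * h) / 2)" using inv2 mc0 by simp
  finally have "sin (real L * h) * X \<le> sin (real L * h) * (- (mc * N / 2))" by (simp add: algebra_simps)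
  then have XN: "X \<le> - (mc * N / 2)" using sL mult_le_cancel_left_pos by blast
  have "mc * (1 / (2 * (real K + 1))) \<le> mc * N" using NB mc0 by (intro mult_left_mono) auto
  moreover have aux: "\<And>a b X::real. a \<le> b \<Longrightarrow> X \<le> -(b/2) \<Longrightarrow> X \<le> -(a/2)" by linarith
  ultimately have "X \<le> - (mc * (1 / (2 * (real K + 1))) / 2)" using XN by blast
  moreover have "mc * (1 / (2 * (real K + 1))) / 2 = mc / (4 * (real K + 1))" by simp
  ultimately have "X \<le> - (mc / (4 * (real K + 1)))" by simp
  then show "sf w Q R (real L + 2) - \<alpha> * sf w Q R (real L + 1) \<le> - cc \<alpha> w K L"
    unfolding X_def cc_def h_def[symmetric] mc_def c1_def c2_def by simp
qed

theorem mainTheorem11: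
  fixes \<alpha> :: real and L K :: nat
  assumes "L \<ge> 1" and "K \<ge> L"
  shows
    "(alpha_crit (L + 1) < ereal \<alpha> \<and> ereal \<alpha> < alpha_crit L \<longrightarrow>
       (\<exists>c > 0. \<forall>l :: nat \<Rightarrow> real.
          system_E \<alpha> K l \<and> (\<forall>j\<in>{1..K+2}. l j \<ge> 0) \<longrightarrow>
            dq \<alpha> K l 0 \<ge> c
            \<and> (l (K + 2) = 0 \<longrightarrow> dq \<alpha> K l (K + 1) \<le> - c)
            \<and> l (L + 2) - \<alpha> * l (L + 1) < - c))
     \<and>
     (alpha_crit (L + 1) < ereal \<alpha> \<and> ereal \<alpha> \<le> alpha_crit L \<longrightarrow>
       (\<forall>l :: nat \<Rightarrow> real. system_E \<alpha> K l \<longrightarrow>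
          l (L + 2) - \<alpha> * l (L + 1) =
            - (sin (real (L + 2) / 2 * omega \<alpha>) / sin (real L / 2 * omega \<alpha>)) * l 1
            + 2 * \<alpha> * (cos (omega \<alpha> / 2) * sin (real (L + 3) / 2 * omega \<alpha>)
                        / sin (real L / 2 * omega \<alpha>)) * l (L + 1)))"
proof (intro conjI impI)
  assume H: "alpha_crit (L + 1) < ereal \<alpha> \<and> ereal \<alpha> < alpha_crit L"
  have a3: "\<alpha> > 1/3" using omega_lo(1)[OF assms(1)] H by blast
  define w where "w = omega \<alpha>"
  have w1: "2*pi/(real L + 3) < w" using omega_lo(2)[OF assms(1)] H unfolding w_def by blast
  have w2: "w < 2*pi/(real L + 2)" using omega_hi(2)[OF assms(1) a3] H unfolding w_def by blast
  note ob = omega_basic[OF a3, folded w_def]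
  have ap: "\<alpha> > 0" using a3 by simp
  have s0: "sin w \<noteq> 0" using sin_gt_zero[of w] ob(1,2) by simp
  have c1: "cos w \<noteq> 1"
  proof
    assume "cos w = 1"
    then have "(1 - \<alpha>) = 2 * \<alpha>" using ob(3) ap by (simp add: field_simps)
    then show False using a3 by simp
  qed
  define c where "c = min (\<alpha> * ca w K L) (cc \<alpha> w K L / 2)"
  have cap: "ca w K L > 0" and ccp: "cc \<alpha> w K L > 0" using consts_pos[OF w1 w2 ap] by auto
  have cp: "c > 0" unfolding c_def using cap ccp ap by simp
  have main: "dq \<alpha> K l 0 \<ge> c \<and> (l (K + 2) = 0 \<longrightarrow> dq \<alpha> K l (K + 1) \<le> - c)
            \<and> l (L + 2) - \<alpha> * l (L + 1) < - c"
    if sysE: "system_E \<alpha> K l" and nn0: "\<forall>j\<in>{1..K+2}. l j \<ge> 0" for l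
  proof -
    obtain Q R where QR: "\<forall>n\<le>K+2. l n = sf w Q R (real n)" using rep[OF sysE ob(4) s0 c1] by blast
    have l0: "l 0 = 0" using sysE unfolding system_E_def by simp
    have lsum: "(\<Sum>j=1..K+1. l j) = 1" using sysE unfolding system_E_def by simp
    have nn: "\<forall>n\<in>{1..K+2}. sf w Q R (real n) \<ge> 0" using nn0 QR by auto
    have sm: "(\<Sum>n=1..K+1. sf w Q R (real n)) = 1" using lsum QR by simp
    note G = gen[OF ob(4) ap w1 w2 assms(1) assms(2) nn sm]
    have l1: "l 1 = sf w Q R 1" using QR by auto
    have l2: "l 2 = sf w Q R 2" using QR by (metis le_add2 of_nat_numeral)
    have "\<alpha> * (sf w Q R (-1 + 3) - sf w Q R (-1)) = sf w Q R (-1 + 2) - sf w Q R (-1 + 1)"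
      by (rule sf_rec[OF ob(4)])
    then have r0: "\<alpha> * (sf w Q R 2 - sf w Q R (-1)) = sf w Q R 1" by simp
    have d0: "dq \<alpha> K l 0 = \<alpha> * sf w Q R (-1)"
      unfolding dq_def using l0 l1 l2 r0 by (simp add: algebra_simps)
    have "\<alpha> * ca w K L \<le> \<alpha> * sf w Q R (-1)" using G(1) ap by simp
    then have A: "dq \<alpha> K l 0 \<ge> c" unfolding d0 c_def by linarith
    have lL: "l (L + 2) - \<alpha> * l (L + 1) = sf w Q R (real L + 2) - \<alpha> * sf w Q R (real L + 1)"
      using QR assms(2) by (simp add: add.commute)
    have C: "l (L + 2) - \<alpha> * l (L + 1) < - c" unfolding lL using G(2) ccp unfolding c_def by linarith
    have B: "dq \<alpha> K l (K + 1) \<le> - c" if z: "l (K + 2) = 0"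
    proof -
      define M where "M = real K + 2"
      have sM: "sf w Q R M = 0" using QR z unfolding M_def by (metis le_refl of_nat_add of_nat_numeral)
      define Q' where "Q' = Q * cos (M*w) + R * sin (M*w)"
      define R' where "R' = Q * sin (M*w) - R * cos (M*w)"
      have g: "\<And>x. sf w Q' R' x = sf w Q R (M - x)" unfolding Q'_def R'_def by (rule sf_reflect[OF sM])
      have gn: "sf w Q' R' (real n) = l (K + 2 - n)" if "n \<le> K + 2" for n
      proof -
        have "M - real n = real (K + 2 - n)" unfolding M_def using that by simp
        then show ?thesis using g QR by simp
      qed
      have nn': "\<forall>n\<in>{1..K+2}. sf w Q' R' (real n) \<ge> 0"
      proof
        fix n assume n: "n \<in> {1..K+2}"
        show "sf w Q' R' (real n) \<ge> 0"
        proof (cases "n = K + 2")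
          case True then show ?thesis using gn[of n] l0 by simp
        next
          case False then show ?thesis using gn[of n] n nn0 by auto
        qed
      qed
      have "(\<Sum>n=1..K+1. sf w Q' R' (real n)) = (\<Sum>n=1..K+1. l (K + 2 - n))"
        by (rule sum.cong) (auto simp: gn)
      also have "\<dots> = (\<Sum>j=1..K+1. l j)"
        using sum.atLeastAtMost_rev[of l 1 "K+1"] by simp
      finally have sm': "(\<Sum>n=1..K+1. sf w Q' R' (real n)) = 1" using lsum by simp
      note G' = gen[OF ob(4) ap w1 w2 assms(1) assms(2) nn' sm']
      have g1: "sf w Q' R' (-1) = sf w Q R (real K + 3)" using g[of "-1"] unfolding M_def by (simp add: add.commute)
      have rK: "\<alpha> * (sf w Q R (real K + 3) - sf w Q R (real K)) = sf w Q R (real K + 2) - sf w Q R (real K + 1)"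
        by (rule sf_rec[OF ob(4)])
      have lK: "l K = sf w Q R (real K)" "l (K+1) = sf w Q R (real K + 1)" "l (K+2) = sf w Q R (real K + 2)"
        using QR by (auto simp: add.commute)
      have dK: "dq \<alpha> K l (K + 1) = - \<alpha> * sf w Q R (real K + 3)"
        unfolding dq_def using lK rK by (simp add: algebra_simps)
      have "\<alpha> * ca w K L \<le> \<alpha> * sf w Q R (real K + 3)" using G'(1) g1 ap by simp
      then show ?thesis unfolding dK c_def by linarith
    qed
    show ?thesis using A B C by blast
  qed
  show "\<exists>c>0. \<forall>l :: nat \<Rightarrow> real. system_E \<alpha> K l \<and> (\<forall>j\<in>{1..K+2}. l j \<ge> 0) \<longrightarrow>
            dq \<alpha> K l 0 \<ge> c
            \<and> (l (K + 2) = 0 \<longrightarrow> dq \<alpha> K l (K + 1) \<le> - c)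
            \<and> l (L + 2) - \<alpha> * l (L + 1) < - c"
    using cp main by blast
next
  assume H: "alpha_crit (L + 1) < ereal \<alpha> \<and> ereal \<alpha> \<le> alpha_crit L"
  have a3: "\<alpha> > 1/3" using omega_lo(1)[OF assms(1)] H by blast
  define w where "w = omega \<alpha>"
  have w2: "w \<le> 2*pi/(real L + 2)" using omega_hi(1)[OF assms(1) a3] H unfolding w_def by blast
  note ob = omega_basic[OF a3, folded w_def]
  have s0: "sin w \<noteq> 0" using sin_gt_zero[of w] ob(1,2) by simp
  have c1: "cos w \<noteq> 1"
  proof
    assume "cos w = 1"
    then have "(1 - \<alpha>) = 2 * \<alpha>" using ob(3) a3 by (simp add: field_simps)
    then show False using a3 by simp
  qed
  have sL: "sin (real L * (w/2)) > 0"
  proof (rule sin_gt_zero)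
    show "0 < real L * (w/2)" using assms(1) ob(1) by simp
    have "real L * (w/2) \<le> real L * (pi / (real L + 2))"
      using w2 by (intro mult_left_mono) (auto simp: field_simps)
    also have "\<dots> < pi" by (simp add: field_simps)
    finally show "real L * (w/2) < pi" .
  qed
  show "\<forall>l :: nat \<Rightarrow> real. system_E \<alpha> K l \<longrightarrow>
          l (L + 2) - \<alpha> * l (L + 1) =
            - (sin (real (L + 2) / 2 * omega \<alpha>) / sin (real L / 2 * omega \<alpha>)) * l 1
            + 2 * \<alpha> * (cos (omega \<alpha> / 2) * sin (real (L + 3) / 2 * omega \<alpha>)
                        / sin (real L / 2 * omega \<alpha>)) * l (L + 1)"
  proof (intro allI impI)
    fix l assume sysE: "system_E \<alpha> K l"
    obtain Q R where QR: "\<forall>n\<le>K+2. l n = sf w Q R (real n)" using rep[OF sysE ob(4) s0 c1] by blast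
    have ls: "l (L + 2) = sf w Q R (real L + 2)" "l (L + 1) = sf w Q R (real L + 1)" "l 1 = sf w Q R 1"
      using QR assms(2) by (auto simp: add.commute)
    have e: "real (L + 2) / 2 * w = (real L + 2) * (w/2)" "real L / 2 * w = real L * (w/2)"
      "real (L + 3) / 2 * w = (real L + 3) * (w/2)" by (simp_all add: field_simps)
    note F = sf_formula[OF ob(4), of L Q R]
    show "l (L + 2) - \<alpha> * l (L + 1) =
            - (sin (real (L + 2) / 2 * omega \<alpha>) / sin (real L / 2 * omega \<alpha>)) * l 1
            + 2 * \<alpha> * (cos (omega \<alpha> / 2) * sin (real (L + 3) / 2 * omega \<alpha>)
                        / sin (real L / 2 * omega \<alpha>)) * l (L + 1)"
      unfolding w_def[symmetric] e ls using F sL by (simp add: field_simps)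
  qed
qed

end
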